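(* Let $\Xi\subseteq\mathbb{R}^d$ be a Polish space with Borel $\sigma$-algebra, equipped with a norm $\|\cdot\|$, and let $\boldsymbol{\xi}_1,\boldsymbol{\xi}_2,\dots$ be independent $\Xi$-valued random variables, $\boldsymbol{\xi}_i$ having distribution $\mathbb{P}_i$. Let $\rho:\mathbb{R}_+\to\mathbb{R}_+$ with $\rho(0)=0$ satisfy $W(\mathbb{P}_i,\mathbb{P}_{i+k})\le\rho(k)$ for all $i\ge1$, $k\ge0$. Let $\mathcal{X}\subseteq\mathbb{R}^n$, $g:\mathbb{R}^n\times\mathbb{R}^d\to\mathbb{R}$ with $g(x,\cdot)$ measurable for every $x$, $N$ a positive integer, and $r_1,\dots,r_N>0$. For $i\in[N]$ let $U_{r_i}(\boldsymbol{\xi}_i):=\{u\in\Xi:\|u-\boldsymbol{\xi}_i\|\le r_i\}$. Then for every $x\in\mathcal{X}$ and every $i\in[N]$, $$\mathbb{P}\big(g(x,u)\le0\ \ \forall u\in U_{r_i}(\boldsymbol{\xi}_i)\big)\le\mathbb{P}\big(g(x,\boldsymbol{\xi}_{N+1})\le0\big)+\frac{\rho(N+1-i)}{r_i}.$$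
   Context: The 1-Wasserstein distance between probability measures $\mathbb{P},\mathbb{P}'$ on $\Xi$ is $W(\mathbb{P},\mathbb{P}'):=\inf_{\pi\in\Pi(\mathbb{P},\mathbb{P}')}\int_{\Xi\times\Xi}\|\xi-\xi'\|\,\pi(d\xi,d\xi')$, where $\Pi(\mathbb{P},\mathbb{P}')$ is the set of couplings with marginals $\mathbb{P}$ and $\mathbb{P}'$. $[N]=\{1,\dots,N\}$. *)

theory Defs
  imports "HOL-Probability.Probability"
begin

definition is_norm :: "('a::real_vector \<Rightarrow> real) \<Rightarrow> bool" where
  "is_norm nrm \<longleftrightarrow>
     (\<forall>x. nrm x \<ge> 0) \<and> (\<forall>x. nrm x = 0 \<longleftrightarrow> x = 0) \<and>
     (\<forall>c x. nrm (c *\<^sub>R x) = \<bar>c\<bar> * nrm x) \<and>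
     (\<forall>x y. nrm (x + y) \<le> nrm x + nrm y)"

definition polish_subspace :: "'a::topological_space set \<Rightarrow> bool" where
  "polish_subspace S \<longleftrightarrow>
     completely_metrizable_space (top_of_set S) \<and> separable_space (top_of_set S)"

definition couplings :: "'a measure \<Rightarrow> 'b measure \<Rightarrow> ('a \<times> 'b) measure set" where
  "couplings P Q = {\<pi>. sets \<pi> = sets (P \<Otimes>\<^sub>M Q) \<and> prob_space \<pi> \<and>
                        distr \<pi> P fst = P \<and> distr \<pi> Q snd = Q}"

definition wasserstein1 :: "('a::real_vector \<Rightarrow> real) \<Rightarrow> 'a measure \<Rightarrow> 'a measure \<Rightarrow> ennreal" where
  "wasserstein1 nrm P Q =
     (INF \<pi>\<in>couplings P Q. \<integral>\<^sup>+ z. ennreal (nrm (fst z - snd z)) \<partial>\<pi>)"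

definition uball :: "('a::real_vector \<Rightarrow> real) \<Rightarrow> 'a set \<Rightarrow> real \<Rightarrow> 'a \<Rightarrow> 'a set" where
  "uball nrm \<Xi> r c = {u\<in>\<Xi>. nrm (u - c) \<le> r}"

end

theory Submission
  imports Defs
begin

lemma norm_sum_le:
  fixes nrm :: "'a::real_vector \<Rightarrow> real"
  assumes "is_norm nrm" "finite B"
  shows "nrm (\<Sum>b\<in>B. f b) \<le> (\<Sum>b\<in>B. nrm (f b))"
  using assms(2)
proof (induction B rule: finite_induct)
  case empty
  have "nrm 0 = 0" using assms(1) unfolding is_norm_def by blast
  then show ?case by simp
next
  case (insert x F)
  have "nrm (f x + sum f F) \<le> nrm (f x) + nrm (sum f F)" using assms(1) by (simp add: is_norm_def)
  then show ?case using insert by simp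
qed

lemma norm_neg:
  fixes nrm :: "'a::real_vector \<Rightarrow> real"
  assumes "is_norm nrm" shows "nrm (a - b) = nrm (b - a)"
proof -
  have "nrm ((-1) *\<^sub>R (a - b)) = \<bar>-1\<bar> * nrm (a - b)" using assms unfolding is_norm_def by blast
  then show ?thesis by simp
qed

lemma norm_cont:
  fixes nrm :: "'a::euclidean_space \<Rightarrow> real"
  assumes n: "is_norm nrm"
  shows "continuous_on UNIV nrm"
proof -
  define C where "C = (\<Sum>b\<in>Basis. nrm b)"
  have C0: "C \<ge> 0" unfolding C_def using n by (simp add: is_norm_def sum_nonneg)
  have bound: "nrm x \<le> C * norm x" for x
  proof -
    have "nrm x = nrm (\<Sum>b\<in>Basis. (x \<bullet> b) *\<^sub>R b)" by (simp add: euclidean_representation)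
    also have "\<dots> \<le> (\<Sum>b\<in>Basis. nrm ((x \<bullet> b) *\<^sub>R b))" by (rule norm_sum_le[OF n]) simp
    also have "\<dots> = (\<Sum>b\<in>Basis. \<bar>x \<bullet> b\<bar> * nrm b)" using n by (simp add: is_norm_def)
    also have "\<dots> \<le> (\<Sum>b\<in>Basis. norm x * nrm b)"
      by (rule sum_mono, rule mult_right_mono) (use n Basis_le_norm in \<open>auto simp: is_norm_def\<close>)
    also have "\<dots> = C * norm x" by (simp add: C_def sum_distrib_left mult.commute)
    finally show ?thesis .
  qed
  have tri: "nrm (x + y) \<le> nrm x + nrm y" for x y using n by (simp add: is_norm_def)
  have "dist (nrm x) (nrm y) \<le> C * dist x y" for x y
  proof -
    have "nrm x \<le> nrm (x - y) + nrm y" using tri[of "x - y" y] by simp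
    moreover have "nrm y \<le> nrm (y - x) + nrm x" using tri[of "y - x" x] by simp
    moreover have "nrm (y - x) = nrm (x - y)" using norm_neg[OF n] by simp
    moreover have "nrm (x - y) \<le> C * dist x y" using bound[of "x - y"] by (simp add: dist_norm)
    ultimately show ?thesis by (simp add: dist_real_def abs_le_iff)
  qed
  then have "C-lipschitz_on UNIV nrm" using C0 by (simp add: lipschitz_on_def)
  then show ?thesis by (rule lipschitz_on_continuous_on)
qed

lemma polish_borel:
  fixes S :: "'a::euclidean_space set"
  assumes "polish_subspace S"
  shows "S \<in> sets borel"
proof -
  have "gdelta_in euclidean S"
    by (rule completely_metrizable_space_imp_gdelta_in)
       (use assms metrizable_space_euclidean in \<open>auto simp: polish_subspace_def\<close>)
  then obtain U where U: "countable U" "\<And>u. u \<in> U \<Longrightarrow> open u" "\<Inter>U = S"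
    by (auto simp: gdelta_in_alt intersection_of_def)
  have "(\<Inter>u\<in>U. u) \<in> sets borel"
    by (rule sets.countable_INT'') (use U in auto)
  then show ?thesis using U by simp
qed

lemma key:
  fixes M :: "'w measure" and X Y :: "'w \<Rightarrow> 'a::euclidean_space"
    and h :: "'a \<Rightarrow> real"
  assumes M: "prob_space M" and Xi: "\<Xi> \<in> sets borel" and n: "is_norm nrm"
    and X: "X \<in> borel_measurable M" and Y: "Y \<in> borel_measurable M"
    and YXi: "\<And>\<omega>. \<omega> \<in> space M \<Longrightarrow> Y \<omega> \<in> \<Xi>"
    and W: "wasserstein1 nrm (distr M borel X) (distr M borel Y) \<le> ennreal \<rho>"
    and rho: "\<rho> \<ge> 0" and r: "r > 0" and h: "h \<in> borel_measurable borel"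
  shows "measure M {\<omega>\<in>space M. \<forall>u\<in>uball nrm \<Xi> r (X \<omega>). h u \<le> 0}
           \<le> measure M {\<omega>\<in>space M. h (Y \<omega>) \<le> 0} + \<rho> / r"
proof -
  interpret prob_space M by fact
  define A where "A = {\<omega>\<in>space M. \<forall>u\<in>uball nrm \<Xi> r (X \<omega>). h u \<le> 0}"
  define B where "B = {\<omega>\<in>space M. h (Y \<omega>) \<le> 0}"
  have B0: "0 \<le> measure M B + \<rho> / r" using rho r by simp
  show ?thesis
  proof (cases "A \<in> sets M")
    case False
    then show ?thesis using B0 by (simp add: A_def[symmetric] B_def[symmetric] measure_notin_sets)
  next
    case AM: True
    show ?thesis unfolding A_def[symmetric] B_def[symmetric]
    proof (rule field_le_epsilon)
      fix e :: real assume e: "e > 0"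
      define P where "P = distr M borel X"
      define Q where "Q = distr M borel Y"
      have "wasserstein1 nrm P Q < ennreal (\<rho> + e * r)"
        using W rho e r unfolding P_def Q_def
        by (smt (verit, ccfv_SIG) ennreal_lessI le_less_trans mult_pos_pos)
      then obtain \<pi> where \<pi>: "\<pi> \<in> couplings P Q"
        and I: "(\<integral>\<^sup>+ z. ennreal (nrm (fst z - snd z)) \<partial>\<pi>) < ennreal (\<rho> + e * r)"
        unfolding wasserstein1_def by (auto simp: INF_less_iff)
      have sp: "sets \<pi> = sets (P \<Otimes>\<^sub>M Q)" and pp: "prob_space \<pi>"
        and m1: "distr \<pi> P fst = P" and m2: "distr \<pi> Q snd = Q"
        using \<pi> by (auto simp: couplings_def)
      interpret pi: prob_space \<pi> by fact
      have "sets (P \<Otimes>\<^sub>M Q) = sets (borel \<Otimes>\<^sub>M borel)"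
        by (rule sets_pair_measure_cong) (simp_all add: P_def Q_def)
      then have spb: "sets \<pi> = sets (borel :: ('a \<times> 'a) measure)"
        using sp by (metis borel_prod)
      then have spU: "space \<pi> = UNIV" using sets_eq_imp_space_eq by fastforce
      have fstm: "fst \<in> measurable \<pi> P"
        using measurable_cong_sets[OF sp refl] measurable_fst by blast
      have sndm: "snd \<in> measurable \<pi> Q"
        using measurable_cong_sets[OF sp refl] measurable_snd by blast
      have marg1: "measure \<pi> (fst -` S) = measure M (X -` S \<inter> space M)" if "S \<in> sets borel" for S
      proof -
        have "measure \<pi> (fst -` S) = measure (distr \<pi> P fst) S"
          using that fstm by (simp add: measure_distr spU P_def)
        also have "\<dots> = measure M (X -` S \<inter> space M)"
          using that X by (simp add: m1, simp add: P_def measure_distr)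
        finally show ?thesis .
      qed
      have emarg1: "emeasure \<pi> (fst -` S) = emeasure M (X -` S \<inter> space M)" if "S \<in> sets borel" for S
      proof -
        have "emeasure \<pi> (fst -` S) = emeasure (distr \<pi> P fst) S"
          using that fstm by (simp add: emeasure_distr spU P_def)
        also have "\<dots> = emeasure M (X -` S \<inter> space M)"
          using that X by (simp add: m1, simp add: P_def emeasure_distr)
        finally show ?thesis .
      qed
      have marg2: "measure \<pi> (snd -` S) = measure M (Y -` S \<inter> space M)" if "S \<in> sets borel" for S
      proof -
        have "measure \<pi> (snd -` S) = measure (distr \<pi> Q snd) S"
          using that sndm by (simp add: measure_distr spU Q_def)
        also have "\<dots> = measure M (Y -` S \<inter> space M)"
          using that Y by (simp add: m2, simp add: Q_def measure_distr)
        finally show ?thesis .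
      qed
      define d where "d z = nrm (fst z - snd z)" for z :: "'a \<times> 'a"
      have dc: "continuous_on UNIV d" unfolding d_def
        by (rule continuous_on_compose2[OF norm_cont[OF n]]) (auto intro!: continuous_intros)
      have dm: "d \<in> borel_measurable borel" by (rule borel_measurable_continuous_onI[OF dc])
      define F where "F = {z. r < d z}"
      define G where "G = {z::'a\<times>'a. h (snd z) \<le> 0}"
      define H where "H = {z::'a\<times>'a. snd z \<in> \<Xi> \<and> 0 < h (snd z) \<and> d z \<le> r}"
      define Z where "Z = {z::'a\<times>'a. snd z \<notin> \<Xi>}"
      have Fb: "F \<in> sets borel" unfolding F_def using dm by measurable
      have sndb: "snd \<in> borel_measurable (borel::('a\<times>'a) measure)"
        by (intro borel_measurable_continuous_onI continuous_intros)
      have hsnd: "(\<lambda>z. h (snd z)) \<in> borel_measurable (borel::('a\<times>'a) measure)"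
        using measurable_comp[OF sndb h] by (simp add: comp_def)
      have Zb: "Z \<in> sets borel"
      proof -
        have "snd -` (- \<Xi>) \<inter> space borel \<in> sets (borel::('a\<times>'a) measure)"
          by (rule measurable_sets[OF sndb]) (use Xi in \<open>auto intro: borel_comp\<close>)
        then show ?thesis by (simp add: Z_def vimage_def Compl_eq)
      qed
      have Gb: "G \<in> sets borel"
      proof -
        have "(\<lambda>z. h (snd z)) -` {..0} \<inter> space borel \<in> sets (borel::('a\<times>'a) measure)"
          by (rule measurable_sets[OF hsnd]) (simp add: borel_closed)
        then show ?thesis by (simp add: G_def vimage_def)
      qed
      have Hb: "H \<in> sets borel"
      proof -
        have "{z::'a\<times>'a. 0 < h (snd z) \<and> d z \<le> r} \<in> sets borel" using hsnd dm by measurable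
        moreover have "H = {z::'a\<times>'a. 0 < h (snd z) \<and> d z \<le> r} - Z" by (auto simp: H_def Z_def)
        ultimately show ?thesis using Zb by auto
      qed
      have "F \<union> G \<union> H \<union> Z = space \<pi>"
        using spU by (auto simp: F_def G_def H_def Z_def)
      then have "1 = measure \<pi> (F \<union> G \<union> H \<union> Z)"
        using pi.prob_space by simp
      also have "\<dots> \<le> measure \<pi> F + measure \<pi> G + measure \<pi> H + measure \<pi> Z"
      proof -
        have s: "F \<in> sets \<pi>" "G \<in> sets \<pi>" "H \<in> sets \<pi>" "Z \<in> sets \<pi>"
          using Fb Gb Hb Zb spb by auto
        have "measure \<pi> (F \<union> G \<union> H \<union> Z) \<le> measure \<pi> (F \<union> G \<union> H) + measure \<pi> Z"
          using s by (intro measure_Un_le) auto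
        moreover have "measure \<pi> (F \<union> G \<union> H) \<le> measure \<pi> (F \<union> G) + measure \<pi> H"
          using s by (intro measure_Un_le) auto
        moreover have "measure \<pi> (F \<union> G) \<le> measure \<pi> F + measure \<pi> G"
          using s by (intro measure_Un_le) auto
        ultimately show ?thesis by linarith
      qed
      finally have sum1: "1 \<le> measure \<pi> F + measure \<pi> G + measure \<pi> H + measure \<pi> Z" .
      have "measure \<pi> Z = measure M (Y -` (- \<Xi>) \<inter> space M)"
        using marg2[of "- \<Xi>"] Xi by (simp add: Z_def vimage_def Compl_eq)
      also have "\<dots> = 0"
      proof -
        have "Y -` (- \<Xi>) \<inter> space M = {}" using YXi by auto
        then show ?thesis by simp
      qed
      finally have Z0: "measure \<pi> Z = 0" .
      have GB: "measure \<pi> G = measure M B"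
        using marg2[of "{b. h b \<le> 0}"] h by (simp add: G_def B_def vimage_def Int_def conj_commute)
      have "ennreal r * emeasure \<pi> F = (\<integral>\<^sup>+ z. ennreal r * indicator F z \<partial>\<pi>)"
        using Fb spb by (simp add: nn_integral_cmult_indicator)
      also have "\<dots> \<le> (\<integral>\<^sup>+ z. ennreal (nrm (fst z - snd z)) \<partial>\<pi>)"
        by (rule nn_integral_mono) (auto simp: F_def d_def indicator_def intro: ennreal_leI)
      also have "\<dots> < ennreal (\<rho> + e * r)" by (rule I)
      finally have "ennreal (r * measure \<pi> F) < ennreal (\<rho> + e * r)"
        using r by (simp add: pi.emeasure_eq_measure ennreal_mult)
      moreover have "0 \<le> r * measure \<pi> F" using r by simp
      ultimately have "r * measure \<pi> F \<le> \<rho> + e * r"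
        using ennreal_less_iff by fastforce
      then have FF: "measure \<pi> F \<le> \<rho> / r + e"
        using r by (simp add: field_simps)
      have "emeasure \<pi> H \<le> emeasure M (space M - A)"
      proof -
        have "emeasure \<pi> H = (SUP K \<in> {K. K \<subseteq> H \<and> compact K}. emeasure \<pi> K)"
          by (rule inner_regular[OF spb]) (simp_all add: Hb)
        also have "\<dots> \<le> emeasure M (space M - A)"
        proof (rule SUP_least, clarify)
          fix K assume KH: "K \<subseteq> H" and K: "compact K"
          have cK: "compact (fst ` K)"
            by (rule compact_continuous_image[OF continuous_on_fst[OF continuous_on_id] K])
          then have bK: "fst ` K \<in> sets borel" by (simp add: compact_imp_closed)
          have "emeasure \<pi> K \<le> emeasure \<pi> (fst -` (fst ` K))"
          proof (rule emeasure_mono)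
            show "K \<subseteq> fst -` fst ` K" by auto
            have "fst -` fst ` K \<inter> space \<pi> \<in> sets \<pi>"
              by (rule measurable_sets[OF fstm]) (simp add: P_def bK)
            then show "fst -` fst ` K \<in> sets \<pi>" using spU by simp
          qed
          also have "\<dots> = emeasure M (X -` (fst ` K) \<inter> space M)" by (rule emarg1[OF bK])
          also have "\<dots> \<le> emeasure M (space M - A)"
          proof (rule emeasure_mono)
            show "X -` fst ` K \<inter> space M \<subseteq> space M - A"
            proof clarify
              fix \<omega> z assume w: "\<omega> \<in> space M" "X \<omega> = fst z" "z \<in> K" and wA: "\<omega> \<in> A"
              then have zH: "snd z \<in> \<Xi>" "0 < h (snd z)" "nrm (fst z - snd z) \<le> r"
                using KH by (auto simp: H_def d_def)
              then have "snd z \<in> uball nrm \<Xi> r (X \<omega>)"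
                using w norm_neg[OF n, of "fst z" "snd z"] by (simp add: uball_def)
              then show False using wA zH by (auto simp: A_def)
            qed
            show "space M - A \<in> sets M" using AM by auto
          qed
          finally show "emeasure \<pi> K \<le> emeasure M (space M - A)" .
        qed
        finally show ?thesis .
      qed
      then have "measure \<pi> H \<le> measure M (space M - A)"
        by (simp add: pi.emeasure_eq_measure emeasure_eq_measure)
      also have "\<dots> = 1 - measure M A" using AM by (simp add: prob_compl)
      finally have HH: "measure \<pi> H \<le> 1 - measure M A" .
      show "measure M A \<le> measure M B + \<rho> / r + e"
        using sum1 Z0 GB FF HH by linarith
    qed
  qed
qed

theorem lemma1:
  fixes M :: "'w measure"
    and \<Xi> :: "(real^'d) set"
    and nrm :: "real^'d \<Rightarrow> real"
    and \<xi> :: "nat \<Rightarrow> 'w \<Rightarrow> real^'d"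
    and \<rho> :: "real \<Rightarrow> real"
    and \<X> :: "(real^'n) set"
    and g :: "real^'n \<Rightarrow> real^'d \<Rightarrow> real"
    and N :: nat
    and r :: "nat \<Rightarrow> real"
  assumes "prob_space M"
    and "polish_subspace \<Xi>"
    and "is_norm nrm"
    and "\<And>i. i \<ge> 1 \<Longrightarrow> \<xi> i \<in> borel_measurable M"
    and "\<And>i \<omega>. i \<ge> 1 \<Longrightarrow> \<omega> \<in> space M \<Longrightarrow> \<xi> i \<omega> \<in> \<Xi>"
    and "prob_space.indep_vars M (\<lambda>_. borel) \<xi> {1..}"
    and "\<And>t. t \<ge> 0 \<Longrightarrow> \<rho> t \<ge> 0"
    and "\<rho> 0 = 0"
    and "\<And>i k. i \<ge> 1 \<Longrightarrow>
           wasserstein1 nrm (distr M borel (\<xi> i)) (distr M borel (\<xi> (i + k))) \<le> ennreal (\<rho> (real k))"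
    and "\<And>x. g x \<in> borel_measurable borel"
    and "N \<ge> 1"
    and "\<And>i. i \<in> {1..N} \<Longrightarrow> r i > 0"
  shows "\<forall>x\<in>\<X>. \<forall>i\<in>{1..N}.
           measure M {\<omega>\<in>space M. \<forall>u\<in>uball nrm \<Xi> (r i) (\<xi> i \<omega>). g x u \<le> 0}
           \<le> measure M {\<omega>\<in>space M. g x (\<xi> (N + 1) \<omega>) \<le> 0} + \<rho> (real (N + 1 - i)) / r i"
proof (intro ballI)
  fix x i assume x: "x \<in> \<X>" and i: "i \<in> {1..N}"
  interpret prob_space M by fact
  have Xi: "\<Xi> \<in> sets borel" by (rule polish_borel) fact
  have eq: "N + 1 = i + (N + 1 - i)" using i by auto
  have W: "wasserstein1 nrm (distr M borel (\<xi> i)) (distr M borel (\<xi> (N + 1)))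
      \<le> ennreal (\<rho> (real (N + 1 - i)))"
    using assms(9)[of i "N + 1 - i"] i eq by simp
  show "measure M {\<omega>\<in>space M. \<forall>u\<in>uball nrm \<Xi> (r i) (\<xi> i \<omega>). g x u \<le> 0}
           \<le> measure M {\<omega>\<in>space M. g x (\<xi> (N + 1) \<omega>) \<le> 0} + \<rho> (real (N + 1 - i)) / r i"
    by (rule key[OF assms(1) Xi assms(3) assms(4) assms(4) assms(5) W assms(7) assms(12) assms(10)])
       (use i in auto)
qed

end
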